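(* Let $T$ be a tree with at least $3$ vertices. Then for every $v\in V(T)$, $f_{T,v}(v)+1\ge \max_{w\in V(T)} f_{T,w}(w)$.
   Context: For a tree $T$ rooted at $v$, the values $f_{T,v}(w)$, $w\in V(T)$, are defined recursively: if $w$ has no children (no descendants) in the rooted tree, $f_{T,v}(w)=0$; otherwise let $u_0,\dots,u_k$ be the children of $w$, let $T_i$ be the subtree consisting of $u_i$ and all its descendants, rooted at $u_i$, and order them so that $c_i:=f_{T_i,u_i}(u_i)$ satisfy $c_0\ge c_1\ge\cdots\ge c_k$; then $f_{T,v}(w)=\max_{0\le i\le k}(i+c_i)$. *)

theory Defs
  imports Main "HOL-Library.Multiset"
begin

definition simple_graph :: "'a set \<Rightarrow> ('a \<Rightarrow> 'a \<Rightarrow> bool) \<Rightarrow> bool" where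
  "simple_graph V E \<longleftrightarrow> finite V \<and> (\<forall>u w. E u w \<longrightarrow> u \<in> V \<and> w \<in> V)
     \<and> (\<forall>u w. E u w \<longrightarrow> E w u) \<and> (\<forall>u. \<not> E u u)"

definition connected_graph :: "'a set \<Rightarrow> ('a \<Rightarrow> 'a \<Rightarrow> bool) \<Rightarrow> bool" where
  "connected_graph V E \<longleftrightarrow> (\<forall>u\<in>V. \<forall>w\<in>V. E\<^sup>*\<^sup>* u w)"

definition is_cycle :: "('a \<Rightarrow> 'a \<Rightarrow> bool) \<Rightarrow> 'a list \<Rightarrow> bool" where
  "is_cycle E cs \<longleftrightarrow> length cs \<ge> 3 \<and> distinct cs
     \<and> (\<forall>i. Suc i < length cs \<longrightarrow> E (cs ! i) (cs ! Suc i))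
     \<and> E (last cs) (hd cs)"

definition is_tree :: "'a set \<Rightarrow> ('a \<Rightarrow> 'a \<Rightarrow> bool) \<Rightarrow> bool" where
  "is_tree V E \<longleftrightarrow> simple_graph V E \<and> V \<noteq> {} \<and> connected_graph V E
     \<and> (\<nexists>cs. is_cycle E cs)"

definition fcomb :: "nat multiset \<Rightarrow> nat" where
  "fcomb M = (let cs = rev (sorted_list_of_multiset M) in
      if cs = [] then 0 else Max {i + cs ! i | i. i < length cs})"

text \<open>fval E p w c: in the rooted tree where w has parent p (None if w is the root),
  the value f at w equals c.\<close>

inductive fval :: "('a \<Rightarrow> 'a \<Rightarrow> bool) \<Rightarrow> 'a option \<Rightarrow> 'a \<Rightarrow> nat \<Rightarrow> bool"
  for E where
  "\<lbrakk> finite {u. E w u \<and> Some u \<noteq> p};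
     \<forall>u\<in>{u. E w u \<and> Some u \<noteq> p}. fval E (Some w) u (g u) \<rbrakk>
   \<Longrightarrow> fval E p w (fcomb (image_mset g (mset_set {u. E w u \<and> Some u \<noteq> p})))"

definition froot :: "('a \<Rightarrow> 'a \<Rightarrow> bool) \<Rightarrow> 'a \<Rightarrow> nat" where
  "froot E v = (THE c. fval E None v c)"

end

theory Submission
  imports Defs
begin


definition cnt :: "nat multiset \<Rightarrow> nat \<Rightarrow> nat" where
  "cnt M t = size (filter_mset (\<lambda>x. t \<le> x) M)"

lemma fcomb_le_iff:
  "fcomb M \<le> k \<longleftrightarrow> (\<forall>i<size M. i + rev (sorted_list_of_multiset M) ! i \<le> k)"
proof -
  define cs where "cs = rev (sorted_list_of_multiset M)"
  have len: "length cs = size M" unfolding cs_def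
    by (metis length_rev mset_sorted_list_of_multiset size_mset)
  show ?thesis
  proof (cases "cs = []")
    case True
    then show ?thesis using len unfolding fcomb_def cs_def[symmetric] by simp
  next
    case False
    have fin: "finite {i + cs ! i | i. i < size M}" by simp
    have ne: "{i + cs ! i | i. i < size M} \<noteq> {}"
    proof -
      have "0 < size M" using False len by (metis length_greater_0_conv)
      thus ?thesis by blast
    qed
    show ?thesis using False len
      unfolding fcomb_def cs_def[symmetric] Let_def
      by (auto simp: Max_le_iff[OF fin ne])
  qed
qed

lemma fcomb_le_cnt:
  "fcomb M \<le> k \<longleftrightarrow> (\<forall>t. cnt M t > 0 \<longrightarrow> t + cnt M t \<le> k + 1)"
proof -
  define cs where "cs = rev (sorted_list_of_multiset M)"
  have mcs: "mset cs = M" unfolding cs_def by simp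
  have len: "length cs = size M" using mcs by (metis size_mset)
  have srt: "\<And>i j. i \<le> j \<Longrightarrow> j < length cs \<Longrightarrow> cs ! j \<le> cs ! i"
  proof -
    have sw: "sorted_wrt (\<ge>) cs" unfolding cs_def by (simp add: sorted_wrt_rev)
    fix i j assume ij: "i \<le> j" "j < length cs"
    show "cs ! j \<le> cs ! i"
    proof (cases "i = j")
      case False
      then show ?thesis using sorted_wrt_nth_less[OF sw, of i j] ij by simp
    qed simp
  qed
  have cnteq: "\<And>t. cnt M t = card {j. j < length cs \<and> t \<le> cs ! j}"
  proof -
    fix t
    have "cnt M t = size (filter_mset (\<lambda>x. t \<le> x) (mset cs))" unfolding cnt_def mcs ..
    also have "\<dots> = length (filter (\<lambda>x. t \<le> x) cs)"
      by (simp only: mset_filter[symmetric] size_mset)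
    also have "\<dots> = card {j. j < length cs \<and> t \<le> cs ! j}" by (rule length_filter_conv_card)
    finally show "cnt M t = card {j. j < length cs \<and> t \<le> cs ! j}" .
  qed
  have fl: "fcomb M \<le> k \<longleftrightarrow> (\<forall>i<length cs. i + cs ! i \<le> k)"
    using fcomb_le_iff[of M k] len cs_def by simp
  show ?thesis
  proof
    assume H: "fcomb M \<le> k"
    show "\<forall>t. cnt M t > 0 \<longrightarrow> t + cnt M t \<le> k + 1"
    proof (intro allI impI)
      fix t assume c: "cnt M t > 0"
      define J where "J = {j. j < length cs \<and> t \<le> cs ! j}"
      have fJ: "finite J" unfolding J_def by simp
      have nJ: "J \<noteq> {}" 
      proof
        assume "J = {}"
        hence "cnt M t = 0" using cnteq[of t] J_def by simp
        thus False using c by simp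
      qed
      define m where "m = Max J"
      have mJ: "m \<in> J" unfolding m_def using fJ nJ by simp
      have "J \<subseteq> {..m}" unfolding m_def using fJ by auto
      hence "card J \<le> Suc m" using card_mono[of "{..m}" J] by simp
      moreover have "m + cs ! m \<le> k" using H fl mJ J_def by auto
      moreover have "t \<le> cs ! m" using mJ J_def by auto
      ultimately show "t + cnt M t \<le> k + 1" using cnteq[of t] J_def by simp
    qed
  next
    assume H: "\<forall>t. cnt M t > 0 \<longrightarrow> t + cnt M t \<le> k + 1"
    show "fcomb M \<le> k" unfolding fl
    proof (intro allI impI)
      fix i assume i: "i < length cs"
      let ?t = "cs ! i"
      have "{..i} \<subseteq> {j. j < length cs \<and> ?t \<le> cs ! j}" using i srt by auto
      hence "Suc i \<le> cnt M ?t" unfolding cnteq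
        using card_mono[of "{j. j < length cs \<and> ?t \<le> cs ! j}" "{..i}"] by simp
      thus "i + cs ! i \<le> k" using H[rule_format, of ?t] by simp
    qed
  qed
qed

lemma fcomb_ge_mem: "c \<in># M \<Longrightarrow> c \<le> fcomb M"
proof -
  assume c: "c \<in># M"
  have "cnt M c > 0"
  proof -
    have "c \<in># filter_mset (\<lambda>x. c \<le> x) M" using c by simp
    hence "filter_mset (\<lambda>x. c \<le> x) M \<noteq> {#}" by auto
    thus "cnt M c > 0" unfolding cnt_def by (metis neq0_conv size_eq_0_iff_empty)
  qed
  hence "c + cnt M c \<le> fcomb M + 1" using fcomb_le_cnt[of M "fcomb M"] by blast
  thus ?thesis using \<open>cnt M c > 0\<close> by linarith
qed

lemma cnt_mono: "M \<subseteq># N \<Longrightarrow> cnt M t \<le> cnt N t"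
  unfolding cnt_def by (simp add: multiset_filter_mono size_mset_mono)

lemma fcomb_mono: "M \<subseteq># N \<Longrightarrow> fcomb M \<le> fcomb N"
proof -
  assume s: "M \<subseteq># N"
  have A: "\<forall>t. cnt N t > 0 \<longrightarrow> t + cnt N t \<le> fcomb N + 1"
    using fcomb_le_cnt[of N "fcomb N"] by simp
  have "\<forall>t. cnt M t > 0 \<longrightarrow> t + cnt M t \<le> fcomb N + 1"
  proof (intro allI impI)
    fix t assume "cnt M t > 0"
    moreover have "cnt M t \<le> cnt N t" using cnt_mono[OF s] .
    ultimately have "cnt N t > 0" "cnt M t \<le> cnt N t" by auto
    moreover have "t + cnt N t \<le> fcomb N + 1" using A calculation(1) by blast
    ultimately show "t + cnt M t \<le> fcomb N + 1" by linarith
  qed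
  thus ?thesis using fcomb_le_cnt[of M "fcomb N"] by simp
qed

lemma fcomb_add:
  assumes "fcomb N \<le> k" "M \<subseteq># N" "a \<le> k + 1"
  shows "fcomb (add_mset a M) \<le> k + 1"
  unfolding fcomb_le_cnt
proof (intro allI impI)
  fix t assume "cnt (add_mset a M) t > 0"
  have ca: "cnt (add_mset a M) t = cnt M t + (if t \<le> a then 1 else 0)"
    unfolding cnt_def by simp
  have cm: "cnt M t \<le> cnt N t" using cnt_mono[OF assms(2)] .
  show "t + cnt (add_mset a M) t \<le> k + 1 + 1"
  proof (cases "cnt N t > 0")
    case True
    have "t + cnt N t \<le> k + 1" using assms(1) fcomb_le_cnt[of N k] True by blast
    then show ?thesis using ca cm by simp
  next
    case False
    then show ?thesis using ca cm assms(3) \<open>cnt (add_mset a M) t > 0\<close>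
      by (cases "t \<le> a") auto
  qed
qed



lemma fval_unique: "fval E p w c \<Longrightarrow> fval E p w c' \<Longrightarrow> c = c'"
proof (induction arbitrary: c' rule: fval.induct)
  case (1 w p g)
  from 1(3) show ?case
  proof (cases rule: fval.cases)
    case (1 g')
    have "image_mset g (mset_set {u. E w u \<and> Some u \<noteq> p}) = image_mset g' (mset_set {u. E w u \<and> Some u \<noteq> p})"
    proof (rule image_mset_cong)
      fix u assume "u \<in># mset_set {u. E w u \<and> Some u \<noteq> p}"
      hence u: "u \<in> {u. E w u \<and> Some u \<noteq> p}" using \<open>finite {u. E w u \<and> Some u \<noteq> p}\<close> by simp
      show "g u = g' u" using "1.IH" 1(3) u by auto
    qed
    then show ?thesis using 1 by simp
  qed
qed



lemma walk_cycle:
  assumes sg: "simple_graph V E"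
    and ed: "\<And>i. E (x i) (x (Suc i))"
    and nb: "\<And>i. x (Suc (Suc i)) \<noteq> x i"
  shows "\<exists>cs. is_cycle E cs"
proof -
  have finV: "finite V" and inV: "\<And>u w. E u w \<Longrightarrow> u \<in> V \<and> w \<in> V"
    and irr: "\<And>u. \<not> E u u" using sg unfolding simple_graph_def by auto
  have "range x \<subseteq> V" using inV ed by auto
  hence "finite (range x)" using finV finite_subset by auto
  hence "\<not> inj x" using finite_imageD by blast
  then obtain a b where ab: "a \<noteq> b" "x a = x b" unfolding inj_def by blast
  define P where "P d \<longleftrightarrow> d > 0 \<and> (\<exists>i. x i = x (i + d))" for d
  have "\<exists>d. P d"
  proof (cases "a < b")
    case True
    then show ?thesis using ab unfolding P_def by (intro exI[of _ "b - a"]) (auto intro!: exI[of _ a])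
  next
    case False
    then show ?thesis using ab unfolding P_def by (intro exI[of _ "a - b"]) (auto intro!: exI[of _ b])
  qed
  define d where "d = (LEAST d. P d)"
  have Pd: "P d" unfolding d_def using \<open>\<exists>d. P d\<close> by (metis LeastI)
  have mind: "\<And>e. P e \<Longrightarrow> d \<le> e" unfolding d_def by (rule Least_le)
  obtain i0 where i0: "x i0 = x (i0 + d)" and d0: "d > 0" using Pd P_def by auto
  have d1: "d \<noteq> 1" using i0 ed[of i0] irr by (metis add.commute plus_1_eq_Suc)
  have d2: "d \<noteq> 2" using i0 nb[of i0] by (metis add_2_eq_Suc')
  define cs where "cs = map (\<lambda>k. x (i0 + k)) [0..<d]"
  have len: "length cs = d" unfolding cs_def by simp
  have nth: "\<And>k. k < d \<Longrightarrow> cs ! k = x (i0 + k)" unfolding cs_def by simp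
  have dist: "distinct cs"
    unfolding distinct_conv_nth len
  proof (intro allI impI)
    fix k l assume kl: "k < d" "l < d" "k \<noteq> l"
    show "cs ! k \<noteq> cs ! l"
    proof
      assume eq: "cs ! k = cs ! l"
      show False
      proof (cases "k < l")
        case True
        have "P (l - k)" unfolding P_def using True eq nth kl
          by (intro conjI exI[of _ "i0 + k"]) auto
        then show False using mind[of "l - k"] kl by simp
      next
        case False
        have "P (k - l)" unfolding P_def using False eq nth kl
          by (intro conjI exI[of _ "i0 + l"]) auto
        then show False using mind[of "k - l"] kl by simp
      qed
    qed
  qed
  have "is_cycle E cs"
    unfolding is_cycle_def
  proof (intro conjI allI impI)
    show "3 \<le> length cs" using len d0 d1 d2 by simp
    show "distinct cs" by (rule dist)
  next
    fix k assume "Suc k < length cs"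
    then show "E (cs ! k) (cs ! Suc k)" using nth len ed[of "i0 + k"] by simp
  next
    have "last cs = cs ! (d - 1)" using len d0 by (metis last_conv_nth length_0_conv not_gr_zero)
    hence "last cs = x (i0 + (d - 1))" using nth[of "d - 1"] d0 by simp
    moreover have "hd cs = cs ! 0" using len d0 by (metis hd_conv_nth length_0_conv not_gr_zero)
    hence "hd cs = x (i0 + d)" using nth[of 0] d0 i0 by simp
    ultimately show "E (last cs) (hd cs)" using ed[of "i0 + (d - 1)"] d0
      by (metis Nat.add_diff_assoc One_nat_def Suc_leI add_Suc_right diff_Suc_1 plus_1_eq_Suc)
  qed
  thus ?thesis by blast
qed

definition stp :: "('a \<Rightarrow> 'a \<Rightarrow> bool) \<Rightarrow> 'a option \<times> 'a \<Rightarrow> 'a option \<times> 'a \<Rightarrow> bool" where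
  "stp E s s' \<longleftrightarrow> fst s' = Some (snd s) \<and> E (snd s) (snd s') \<and> Some (snd s') \<noteq> fst s"

lemma wf_stp:
  assumes "is_tree V E"
  shows "wf {(s', s). stp E s s'}"
proof (rule ccontr)
  assume "\<not> wf {(s', s). stp E s s'}"
  then obtain f where f: "\<And>i. stp E (f i) (f (Suc i))"
    unfolding wf_iff_no_infinite_down_chain by auto
  define x where "x i = snd (f i)" for i
  have ed: "\<And>i. E (x i) (x (Suc i))" using f unfolding stp_def x_def by auto
  have nb: "\<And>i. x (Suc (Suc i)) \<noteq> x i"
  proof -
    fix i
    have "fst (f (Suc i)) = Some (x i)" using f[of i] unfolding stp_def x_def by auto
    thus "x (Suc (Suc i)) \<noteq> x i" using f[of "Suc i"] unfolding stp_def x_def by auto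
  qed
  have sg: "simple_graph V E" using assms unfolding is_tree_def by auto
  from walk_cycle[of V E x, OF sg ed nb] show False using assms unfolding is_tree_def by auto
qed

lemma fval_exists:
  assumes "is_tree V E"
  shows "\<exists>c. fval E p w c"
proof -
  have finV: "finite V" and inV: "\<And>u w. E u w \<Longrightarrow> u \<in> V \<and> w \<in> V"
    using assms unfolding is_tree_def simple_graph_def by auto
  have "\<forall>p w. (p, w) = s \<longrightarrow> (\<exists>c. fval E p w c)" for s
  proof (induction s rule: wf_induct[OF wf_stp[OF assms]])
    case (1 s)
    show ?case
    proof (intro allI impI)
      fix p w assume s: "(p, w) = s"
      define S where "S = {u. E w u \<and> Some u \<noteq> p}"
      have finS: "finite S" using finV inV unfolding S_def by (metis (no_types, lifting) mem_Collect_eq rev_finite_subset subsetI)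
      have "\<forall>u\<in>S. \<exists>c. fval E (Some w) u c"
        using 1 s unfolding S_def stp_def by auto
      then obtain g where g: "\<forall>u\<in>S. fval E (Some w) u (g u)" by metis
      show "\<exists>c. fval E p w c"
        using fval.intros[of E w p g] finS g unfolding S_def by blast
    qed
  qed
  thus ?thesis by blast
qed



definition FF :: "('a \<Rightarrow> 'a \<Rightarrow> bool) \<Rightarrow> 'a option \<Rightarrow> 'a \<Rightarrow> nat" where
  "FF E p w = (THE c. fval E p w c)"

lemma FF_fval: "is_tree V E \<Longrightarrow> fval E p w (FF E p w)"
  unfolding FF_def using fval_exists[of V E p w] fval_unique[of E p w]
  by (metis theI)

lemma fin_ch: "is_tree V E \<Longrightarrow> finite {u. E w u \<and> P u}"
proof -
  assume t: "is_tree V E"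
  have "finite V" "\<And>u w. E u w \<Longrightarrow> u \<in> V \<and> w \<in> V"
    using t unfolding is_tree_def simple_graph_def by auto
  thus ?thesis by (metis (no_types, lifting) mem_Collect_eq rev_finite_subset subsetI)
qed

lemma FF_eq:
  assumes t: "is_tree V E"
  shows "FF E p w = fcomb (image_mset (FF E (Some w)) (mset_set {u. E w u \<and> Some u \<noteq> p}))"
proof -
  from FF_fval[OF t, of p w] show ?thesis
  proof (cases rule: fval.cases)
    case (1 g)
    have "image_mset g (mset_set {u. E w u \<and> Some u \<noteq> p}) = image_mset (FF E (Some w)) (mset_set {u. E w u \<and> Some u \<noteq> p})"
    proof (rule image_mset_cong)
      fix u assume "u \<in># mset_set {u. E w u \<and> Some u \<noteq> p}"
      hence u: "u \<in> {u. E w u \<and> Some u \<noteq> p}" using 1(2) by simp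
      show "g u = FF E (Some w) u" using fval_unique[OF _ FF_fval[OF t]] 1(3) u by blast
    qed
    then show ?thesis using 1 by simp
  qed
qed

lemma key_add:
  assumes fA: "finite A" and fB: "finite B" and a: "a \<in> A" and sub: "A - {a} \<subseteq> B"
    and kB: "fcomb (image_mset h (mset_set B)) \<le> k" and ha: "h a \<le> k + 1"
  shows "fcomb (image_mset h (mset_set A)) \<le> k + 1"
proof -
  have "mset_set A = add_mset a (mset_set (A - {a}))"
    using fA a by (metis mset_set.remove top_greatest)
  hence eq: "image_mset h (mset_set A) = add_mset (h a) (image_mset h (mset_set (A - {a})))" by simp
  have "image_mset h (mset_set (A - {a})) \<subseteq># image_mset h (mset_set B)"
    by (rule image_mset_subseteq_mono, rule subset_imp_msubset_mset_set[OF sub fB])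
  from fcomb_add[OF kB this ha] show ?thesis unfolding eq .
qed

lemma reach_none:
  "(stp E)\<^sup>*\<^sup>* (None, v) s \<Longrightarrow> fst s = None \<Longrightarrow> snd s = v"
  by (induction rule: rtranclp_induct) (auto simp: stp_def)

lemma reach_edge:
  "(stp E)\<^sup>*\<^sup>* (None, v) s \<Longrightarrow> fst s = Some q \<Longrightarrow> E q (snd s)"
  by (induction rule: rtranclp_induct) (auto simp: stp_def)

lemma reach_D:
  assumes t: "is_tree V E"
  shows "(stp E)\<^sup>*\<^sup>* (None, v) s \<Longrightarrow> FF E (fst s) (snd s) \<le> FF E None v"
proof (induction rule: rtranclp_induct)
  case base
  then show ?case by simp
next
  case (step y z)
  have z: "fst z = Some (snd y)" "E (snd y) (snd z)" "Some (snd z) \<noteq> fst y"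
    using step(2) unfolding stp_def by auto
  let ?S = "{u. E (snd y) u \<and> Some u \<noteq> fst y}"
  have "snd z \<in> ?S" using z by simp
  hence "FF E (Some (snd y)) (snd z) \<in># image_mset (FF E (Some (snd y))) (mset_set ?S)"
    using fin_ch[OF t] by simp
  hence "FF E (Some (snd y)) (snd z) \<le> FF E (fst y) (snd y)"
    using fcomb_ge_mem FF_eq[OF t, of "fst y" "snd y"] by simp
  then show ?case using step(3) z(1) by simp
qed

lemma reach_U:
  assumes t: "is_tree V E"
  shows "(stp E)\<^sup>*\<^sup>* (None, v) s \<Longrightarrow> fst s = Some q \<Longrightarrow> FF E (Some (snd s)) q \<le> FF E None v + 1"
proof (induction arbitrary: q rule: rtranclp_induct)
  case base
  then show ?case by simp
next
  case (step y z)
  have z: "fst z = Some (snd y)" "E (snd y) (snd z)" "Some (snd z) \<noteq> fst y"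
    using step(2) unfolding stp_def by auto
  have symE: "\<And>a b. E a b \<Longrightarrow> E b a" using t unfolding is_tree_def simple_graph_def by auto
  have q: "q = snd y" using z(1) step(4) by simp
  let ?w = "snd z"
  let ?A = "{u. E q u \<and> Some u \<noteq> Some ?w}"
  show ?case
  proof (cases "fst y")
    case None
    hence qv: "q = v" using reach_none[OF step(1)] q by simp
    let ?C = "{u. E q u \<and> Some u \<noteq> None}"
    have sub: "?A \<subseteq> ?C" by auto
    have fC: "finite ?C" by (rule fin_ch[OF t])
    have "mset_set ?A \<subseteq># mset_set ?C" by (rule subset_imp_msubset_mset_set[OF sub fC])
    hence "image_mset (FF E (Some q)) (mset_set ?A) \<subseteq># image_mset (FF E (Some q)) (mset_set ?C)"
      by (rule image_mset_subseteq_mono)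
    hence le: "fcomb (image_mset (FF E (Some q)) (mset_set ?A)) \<le> fcomb (image_mset (FF E (Some q)) (mset_set ?C))"
      by (rule fcomb_mono)
    have e1: "FF E (Some ?w) q = fcomb (image_mset (FF E (Some q)) (mset_set ?A))" by (rule FF_eq[OF t])
    have e2: "FF E None q = fcomb (image_mset (FF E (Some q)) (mset_set ?C))" by (rule FF_eq[OF t])
    have "FF E (Some ?w) q \<le> FF E None q" unfolding e1 e2 by (rule le)
    then show ?thesis using qv by simp
  next
    case (Some q')
    have eq': "E q' q" using reach_edge[OF step(1) Some] q by simp
    have qw: "q' \<noteq> ?w" using z(3) Some by auto
    have IH: "FF E (Some q) q' \<le> FF E None v + 1" using step(3)[OF Some] q by simp
    have D: "FF E (Some q') q \<le> FF E None v" using reach_D[OF t step(1)] Some q by simp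
    let ?B = "{u. E q u \<and> Some u \<noteq> Some q'}"
    have "FF E (Some ?w) q = fcomb (image_mset (FF E (Some q)) (mset_set ?A))"
      by (rule FF_eq[OF t])
    also have "\<dots> \<le> FF E None v + 1"
    proof (rule key_add[of ?A ?B q'])
      show "finite ?A" by (rule fin_ch[OF t])
      show "finite ?B" by (rule fin_ch[OF t])
      show "q' \<in> ?A" using eq' symE qw by auto
      show "?A - {q'} \<subseteq> ?B" by auto
      show "fcomb (image_mset (FF E (Some q)) (mset_set ?B)) \<le> FF E None v"
        using D FF_eq[OF t, of "Some q'" q] by simp
      show "FF E (Some q) q' \<le> FF E None v + 1" by (rule IH)
    qed
    finally show ?thesis .
  qed
qed

lemma reach_all:
  assumes "E\<^sup>*\<^sup>* v x"
  shows "\<exists>p. (stp E)\<^sup>*\<^sup>* (None, v) (p, x)"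
  using assms
proof (induction rule: rtranclp_induct)
  case base
  then show ?case by blast
next
  case (step y z)
  then obtain p where r: "(stp E)\<^sup>*\<^sup>* (None, v) (p, y)" by blast
  show ?case
  proof (cases "p = Some z")
    case False
    have "stp E (p, y) (Some y, z)" using False step(2) unfolding stp_def by auto
    then show ?thesis using r by (meson rtranclp.rtrancl_into_rtrancl)
  next
    case True
    have "(None, v) = (Some z, y) \<or> (\<exists>s. (stp E)\<^sup>*\<^sup>* (None, v) s \<and> stp E s (Some z, y))"
      using r[unfolded True] by (cases rule: rtranclp.cases) auto
    then obtain s where s: "(stp E)\<^sup>*\<^sup>* (None, v) s" "stp E s (Some z, y)" by auto
    have "snd s = z" using s(2) unfolding stp_def by simp
    hence "s = (fst s, z)" by (metis prod.collapse)
    then show ?thesis using s(1) by metis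
  qed
qed

theorem proposition4p3:
  fixes V :: "'a set" and E :: "'a \<Rightarrow> 'a \<Rightarrow> bool" and v :: 'a
  assumes "is_tree V E" and "card V \<ge> 3" and "v \<in> V"
  shows "froot E v + 1 \<ge> Max ((\<lambda>w. froot E w) ` V)"
proof -
  have t: "is_tree V E" by fact
  have fr: "\<And>x. froot E x = FF E None x" unfolding froot_def FF_def by simp
  have finV: "finite V" and conn: "\<And>a b. a \<in> V \<Longrightarrow> b \<in> V \<Longrightarrow> E\<^sup>*\<^sup>* a b"
    and symE: "\<And>a b. E a b \<Longrightarrow> E b a"
    using t unfolding is_tree_def simple_graph_def connected_graph_def by auto
  have "\<forall>w\<in>V. FF E None w \<le> FF E None v + 1"
  proof
    fix w assume w: "w \<in> V"
    show "FF E None w \<le> FF E None v + 1"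
    proof (cases "w = v")
      case True then show ?thesis by simp
    next
      case False
      obtain p where r: "(stp E)\<^sup>*\<^sup>* (None, v) (p, w)" using reach_all[OF conn[OF assms(3) w]] by blast
      have "p \<noteq> None" using reach_none[OF r] False by auto
      then obtain q where p: "p = Some q" by auto
      have eqw: "E q w" using reach_edge[OF r] p by simp
      have D: "FF E (Some q) w \<le> FF E None v" using reach_D[OF t r] p by simp
      have U: "FF E (Some w) q \<le> FF E None v + 1" using reach_U[OF t r] p by simp
      let ?A = "{u. E w u \<and> Some u \<noteq> None}"
      let ?B = "{u. E w u \<and> Some u \<noteq> Some q}"
      have "FF E None w = fcomb (image_mset (FF E (Some w)) (mset_set ?A))"
        by (rule FF_eq[OF t])
      also have "\<dots> \<le> FF E None v + 1"
      proof (rule key_add[of ?A ?B q])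
        show "finite ?A" by (rule fin_ch[OF t])
        show "finite ?B" by (rule fin_ch[OF t])
        show "q \<in> ?A" using eqw symE by auto
        show "?A - {q} \<subseteq> ?B" by auto
        show "fcomb (image_mset (FF E (Some w)) (mset_set ?B)) \<le> FF E None v"
          using D FF_eq[OF t, of "Some q" w] by simp
        show "FF E (Some w) q \<le> FF E None v + 1" by (rule U)
      qed
      finally show ?thesis .
    qed
  qed
  moreover have "V \<noteq> {}" using assms(3) by auto
  ultimately show ?thesis using finV unfolding fr by (simp add: Max_le_iff)
qed


end
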